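(* Let $a,b>0$ with $a\ne b$, and $\nu\in(0,\tfrac12)\cup(\tfrac12,1)$. Let $r=\min\{\nu,1-\nu\}$, $R=\max\{\nu,1-\nu\}$, and $$\alpha_\nu(a,b):=\left(\frac{a^{a/\nu}}{b^{b/(1-\nu)}}\cdot\frac{(a\nabla_\nu b)^{\frac{a\nabla_\nu b}{\nu(1-\nu)(2\nu-1)}}}{\big(\frac{a+b}{2}\big)^{\frac{2(a+b)}{2\nu-1}}}\right)^{\frac{1}{b-a}}.$$ Then $\alpha_\nu(a,b)\ge1$, $$\alpha_\nu(a,b)^{r}\,K(a,b)^{\widetilde r(\nu)}\le\frac{a\nabla_\nu b}{a\sharp_\nu b}\le \alpha_\nu(a,b)^{R}\,K(a,b)^{\widetilde R(\nu)},$$ and $$I_\nu(a,b)\le\frac1e\left(\frac{a^a}{b^b}\cdot\frac{\big(\frac{a+b}{2}\big)^{\frac{2(a+b)}{1-2\nu}}}{(a\nabla_\nu b)^{\frac{4(a\nabla_\nu b)}{1-2\nu}}}\right)^{\frac{1}{b-a}}.$$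
   Context: $a\nabla_\nu b:=(1-\nu)a+\nu b$, $a\sharp_\nu b:=a^{1-\nu}b^\nu$. Kantorovich constant: $K(a,b):=\frac{(a+b)^2}{4ab}$. Weighted identric mean: $$I_\nu(a,b):=\frac1e\,\big(a\nabla_\nu b\big)^{\frac{(1-2\nu)(a\nabla_\nu b)}{\nu(1-\nu)(b-a)}}\left(\frac{b^{\frac{\nu b}{1-\nu}}}{a^{\frac{(1-\nu)a}{\nu}}}\right)^{\frac{1}{b-a}}.$$ For $\lambda\in[0,1]$ let $r_1(\lambda)=\min\{\nu\lambda,1-\nu\lambda\}$, $r_2(\lambda)=\min\{(1-\nu)\lambda,1-(1-\nu)\lambda\}$, $R_1(\lambda)=\max\{\nu\lambda,1-\nu\lambda\}$, $R_2(\lambda)=\max\{(1-\nu)\lambda,1-(1-\nu)\lambda\}$, and $\widetilde r(\nu):=\int_0^1((1-\nu)r_1(\lambda)+\nu r_2(\lambda))d\lambda$, $\widetilde R(\nu):=\int_0^1((1-\nu)R_1(\lambda)+\nu R_2(\lambda))d\lambda$. *)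

theory Defs
  imports "HOL-Analysis.Analysis"
begin

definition wam :: "real \<Rightarrow> real \<Rightarrow> real \<Rightarrow> real" where
  "wam \<nu> a b = (1 - \<nu>) * a + \<nu> * b"

definition wgm :: "real \<Rightarrow> real \<Rightarrow> real \<Rightarrow> real" where
  "wgm \<nu> a b = a powr (1 - \<nu>) * b powr \<nu>"

definition kant :: "real \<Rightarrow> real \<Rightarrow> real" where
  "kant a b = (a + b)^2 / (4 * a * b)"

definition identric_w :: "real \<Rightarrow> real \<Rightarrow> real \<Rightarrow> real" where
  "identric_w \<nu> a b =
     (1 / exp 1) * (wam \<nu> a b) powr ((1 - 2*\<nu>) * wam \<nu> a b / (\<nu> * (1 - \<nu>) * (b - a)))
       * ((b powr (\<nu> * b / (1 - \<nu>))) / (a powr ((1 - \<nu>) * a / \<nu>))) powr (1 / (b - a))"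

definition r1 :: "real \<Rightarrow> real \<Rightarrow> real" where
  "r1 \<nu> l = min (\<nu> * l) (1 - \<nu> * l)"
definition r2 :: "real \<Rightarrow> real \<Rightarrow> real" where
  "r2 \<nu> l = min ((1 - \<nu>) * l) (1 - (1 - \<nu>) * l)"
definition R1 :: "real \<Rightarrow> real \<Rightarrow> real" where
  "R1 \<nu> l = max (\<nu> * l) (1 - \<nu> * l)"
definition R2 :: "real \<Rightarrow> real \<Rightarrow> real" where
  "R2 \<nu> l = max ((1 - \<nu>) * l) (1 - (1 - \<nu>) * l)"

definition r_tilde :: "real \<Rightarrow> real" where
  "r_tilde \<nu> = integral {0..1} (\<lambda>l. (1 - \<nu>) * r1 \<nu> l + \<nu> * r2 \<nu> l)"
definition R_tilde :: "real \<Rightarrow> real" where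
  "R_tilde \<nu> = integral {0..1} (\<lambda>l. (1 - \<nu>) * R1 \<nu> l + \<nu> * R2 \<nu> l)"

definition alpha_nu :: "real \<Rightarrow> real \<Rightarrow> real \<Rightarrow> real" where
  "alpha_nu \<nu> a b =
     ((a powr (a / \<nu>) / b powr (b / (1 - \<nu>)))
      * ((wam \<nu> a b) powr (wam \<nu> a b / (\<nu> * (1 - \<nu>) * (2*\<nu> - 1)))
         / ((a + b) / 2) powr (2 * (a + b) / (2*\<nu> - 1)))) powr (1 / (b - a))"

end

theory Submission
  imports Defs
begin


lemma ftc_poly:
  fixes F f :: "real \<Rightarrow> real" and p q :: real
  assumes "p \<le> q" "\<And>l. l \<in> {p..q} \<Longrightarrow> (F has_real_derivative f l) (at l)"
  shows "(f has_integral (F q - F p)) {p..q}"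
  apply (rule fundamental_theorem_of_calculus[OF assms(1)])
  using assms(2) by (metis has_real_derivative_iff_has_vector_derivative has_vector_derivative_at_within)

lemma r_tilde_lt:
  assumes "0 < \<nu>" "\<nu> < 1/2"
  shows "((\<lambda>l. (1 - \<nu>) * r1 \<nu> l + \<nu> * r2 \<nu> l) has_integral (\<nu>*(3-4*\<nu>)/(4*(1-\<nu>)))) {0..1}"
proof -
  define c where "c = 1/(2*(1-\<nu>))"
  have c0: "0 \<le> c" "c \<le> 1" using assms by (auto simp: c_def field_simps)
  have i1: "((\<lambda>l. (1 - \<nu>) * r1 \<nu> l + \<nu> * r2 \<nu> l) has_integral (\<nu>*(1-\<nu>)*c^2 - \<nu>*(1-\<nu>)*0^2)) {0..c}"
  proof (rule ftc_poly[OF c0(1)])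
    fix l assume l: "l \<in> {0..c}"
    have "\<nu> * l \<le> 1/2" using l c0 assms
      by (smt (verit, best) atLeastAtMost_iff mult_left_le mult_le_cancel_left1)
    moreover have "(1-\<nu>) * l \<le> 1/2" using l assms unfolding c_def
      by (auto simp: field_simps)
    ultimately have e: "(1 - \<nu>) * r1 \<nu> l + \<nu> * r2 \<nu> l = \<nu>*(1-\<nu>)*(2*l)"
      unfolding r1_def r2_def by (simp add: min_def algebra_simps)
    show "((\<lambda>l. \<nu>*(1-\<nu>)*l^2) has_real_derivative (1 - \<nu>) * r1 \<nu> l + \<nu> * r2 \<nu> l) (at l)"
      unfolding e by (auto intro!: derivative_eq_intros)
  qed
  have i2: "((\<lambda>l. (1 - \<nu>) * r1 \<nu> l + \<nu> * r2 \<nu> l) has_integral (\<nu>*1 - \<nu>*c)) {c..1}"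
  proof (rule ftc_poly[OF c0(2)])
    fix l assume l: "l \<in> {c..1}"
    have "\<nu> * l \<le> 1/2" using l c0 assms
      by (smt (verit, best) atLeastAtMost_iff mult_left_le mult_le_cancel_left1)
    moreover have "(1-\<nu>) * l \<ge> 1/2" using l assms unfolding c_def
      by (auto simp: field_simps)
    ultimately have "r1 \<nu> l = \<nu>*l" "r2 \<nu> l = 1 - (1-\<nu>)*l"
      unfolding r1_def r2_def by (auto intro!: min_absorb1 min_absorb2)
    then have e: "(1 - \<nu>) * r1 \<nu> l + \<nu> * r2 \<nu> l = \<nu>"
      by (simp only:) (simp add: algebra_simps)
    show "((\<lambda>l. \<nu>*l) has_real_derivative (1 - \<nu>) * r1 \<nu> l + \<nu> * r2 \<nu> l) (at l)"
      unfolding e by (auto intro!: derivative_eq_intros)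
  qed
  have "(\<nu>*(1-\<nu>)*c^2 - \<nu>*(1-\<nu>)*0^2) + (\<nu>*1 - \<nu>*c) = \<nu>*(3-4*\<nu>)/(4*(1-\<nu>))"
  proof -
    define D where "D = 1 - \<nu>"
    have n: "\<nu> = 1 - D" unfolding D_def by simp
    have "D \<noteq> 0" using assms D_def by simp
    then show ?thesis unfolding c_def unfolding D_def[symmetric] unfolding n
      by (simp add: field_simps power2_eq_square)
  qed
  then show ?thesis using has_integral_combine[OF c0 i1 i2] by simp
qed

lemma r_tilde_gt:
  assumes "1/2 < \<nu>" "\<nu> < 1"
  shows "((\<lambda>l. (1 - \<nu>) * r1 \<nu> l + \<nu> * r2 \<nu> l) has_integral ((1-\<nu>)*(4*\<nu>-1)/(4*\<nu>))) {0..1}"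
proof -
  define c where "c = 1/(2*\<nu>)"
  have c0: "0 \<le> c" "c \<le> 1" using assms by (auto simp: c_def field_simps)
  have i1: "((\<lambda>l. (1 - \<nu>) * r1 \<nu> l + \<nu> * r2 \<nu> l) has_integral (\<nu>*(1-\<nu>)*c^2 - \<nu>*(1-\<nu>)*0^2)) {0..c}"
  proof (rule ftc_poly[OF c0(1)])
    fix l assume l: "l \<in> {0..c}"
    have "(1-\<nu>)*l \<le> (1-\<nu>)" using l c0 assms by (intro mult_left_le) auto
    then have "(1-\<nu>) * l \<le> 1/2" using assms by linarith
    moreover have "\<nu> * l \<le> 1/2" using l assms unfolding c_def
      by (auto simp: field_simps)
    ultimately have "r1 \<nu> l = \<nu>*l" "r2 \<nu> l = (1-\<nu>)*l"
      unfolding r1_def r2_def by (auto intro!: min_absorb1 min_absorb2)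
    then have e: "(1 - \<nu>) * r1 \<nu> l + \<nu> * r2 \<nu> l = \<nu>*(1-\<nu>)*(2*l)"
      by (simp only:) (simp add: algebra_simps)
    show "((\<lambda>l. \<nu>*(1-\<nu>)*l^2) has_real_derivative (1 - \<nu>) * r1 \<nu> l + \<nu> * r2 \<nu> l) (at l)"
      unfolding e by (auto intro!: derivative_eq_intros)
  qed
  have i2: "((\<lambda>l. (1 - \<nu>) * r1 \<nu> l + \<nu> * r2 \<nu> l) has_integral ((1-\<nu>)*1 - (1-\<nu>)*c)) {c..1}"
  proof (rule ftc_poly[OF c0(2)])
    fix l assume l: "l \<in> {c..1}"
    have "(1-\<nu>)*l \<le> (1-\<nu>)" using l c0 assms by (intro mult_left_le) auto
    then have "(1-\<nu>) * l \<le> 1/2" using assms by linarith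
    moreover have "\<nu> * l \<ge> 1/2" using l assms unfolding c_def
      by (auto simp: field_simps)
    ultimately have "r1 \<nu> l = 1 - \<nu>*l" "r2 \<nu> l = (1-\<nu>)*l"
      unfolding r1_def r2_def by (auto intro!: min_absorb1 min_absorb2)
    then have e: "(1 - \<nu>) * r1 \<nu> l + \<nu> * r2 \<nu> l = 1 - \<nu>"
      by (simp only:) (simp add: algebra_simps)
    show "((\<lambda>l. (1-\<nu>)*l) has_real_derivative (1 - \<nu>) * r1 \<nu> l + \<nu> * r2 \<nu> l) (at l)"
      unfolding e by (auto intro!: derivative_eq_intros)
  qed
  have "(\<nu>*(1-\<nu>)*c^2 - \<nu>*(1-\<nu>)*0^2) + ((1-\<nu>)*1 - (1-\<nu>)*c) = (1-\<nu>)*(4*\<nu>-1)/(4*\<nu>)"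
  proof -
    have "\<nu> \<noteq> 0" using assms by simp
    then show ?thesis unfolding c_def by (simp add: field_simps power2_eq_square)
  qed
  then show ?thesis using has_integral_combine[OF c0 i1 i2] by simp
qed

lemma R_from_r:
  assumes "((\<lambda>l. (1 - \<nu>) * r1 \<nu> l + \<nu> * r2 \<nu> l) has_integral I) {0..1}"
  shows "r_tilde \<nu> = I" "R_tilde \<nu> = 1 - I"
proof -
  show "r_tilde \<nu> = I" unfolding r_tilde_def using assms by (rule integral_unique)
  have e: "(\<lambda>l. (1 - \<nu>) * R1 \<nu> l + \<nu> * R2 \<nu> l) = (\<lambda>l. 1 - ((1 - \<nu>) * r1 \<nu> l + \<nu> * r2 \<nu> l))"
  proof
    fix l
    have "R1 \<nu> l = 1 - r1 \<nu> l" "R2 \<nu> l = 1 - r2 \<nu> l"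
      unfolding R1_def r1_def R2_def r2_def by (simp_all add: max_def min_def)
    then show "(1 - \<nu>) * R1 \<nu> l + \<nu> * R2 \<nu> l = 1 - ((1 - \<nu>) * r1 \<nu> l + \<nu> * r2 \<nu> l)"
      by (simp only:) (simp add: algebra_simps)
  qed
  have "((\<lambda>l. 1 - ((1 - \<nu>) * r1 \<nu> l + \<nu> * r2 \<nu> l)) has_integral (1 - I)) {0..1}"
    using has_integral_diff[OF has_integral_const_real[of "1::real" 0 1] assms] by simp
  then show "R_tilde \<nu> = 1 - I" unfolding R_tilde_def e by (rule integral_unique)
qed



lemma sign_lemma:
  fixes g g' g'' :: "real \<Rightarrow> real" and a b :: real
  assumes "a > 0" "b > 0"
    and d1: "\<And>u. u > 0 \<Longrightarrow> (g has_real_derivative g' u) (at u)"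
    and d2: "\<And>u. u > 0 \<Longrightarrow> (g' has_real_derivative g'' u) (at u)"
    and z0: "g a = 0" and z1: "g' a = 0"
    and s: "\<And>u. u > 0 \<Longrightarrow> (u - a) * g'' u \<ge> 0"
  shows "(b - a) * g b \<ge> 0"
proof (cases "a < b")
  case True
  have g'pos: "g' x \<ge> 0" if "a \<le> x" "x \<le> b" for x
  proof (cases "x = a")
    case False
    then have ax: "a < x" using that by simp
    obtain z where z: "a < z" "z < x" "g' x - g' a = (x - a) * g'' z"
      using MVT2[OF ax, of g' g''] d2 assms(1) by force
    have "(z - a) * g'' z \<ge> 0" using s z assms(1) by simp
    then have "g'' z \<ge> 0" using z by (simp add: zero_le_mult_iff)
    then show ?thesis using z z1 ax by simp
  qed (use z1 in simp)
  obtain z where z: "a < z" "z < b" "g b - g a = (b - a) * g' z"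
    using MVT2[OF True, of g g'] d1 assms(1) by force
  have "g' z \<ge> 0" using g'pos z by simp
  then show ?thesis using z z0 True by simp
next
  case False
  show ?thesis
  proof (cases "b = a")
    case True then show ?thesis by simp
  next
    case False
    then have ba: "b < a" using \<open>\<not> a < b\<close> by simp
    have g'pos: "g' x \<ge> 0" if bx: "b \<le> x" "x \<le> a" for x
    proof (cases "x = a")
      case False
      then have xa: "x < a" using that by simp
      obtain z where z: "x < z" "z < a" "g' a - g' x = (a - x) * g'' z"
        using MVT2[OF xa, of g' g''] d2 assms(2) bx by force
      have "(z - a) * g'' z \<ge> 0" using s z assms(2) bx by simp
      then have "g'' z \<le> 0" using z by (simp add: zero_le_mult_iff)
      then have "(a - x) * g'' z \<le> 0" using xa by (simp add: mult_nonneg_nonpos)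
      then show ?thesis using z z1 by simp
    qed (use z1 in simp)
    obtain z where z: "b < z" "z < a" "g a - g b = (a - b) * g' z"
      using MVT2[OF ba, of g g'] d1 assms(2) by force
    have "g' z \<ge> 0" using g'pos z by simp
    then have "(a - b) * g' z \<ge> 0" using ba by simp
    then have "g b \<le> 0" using z z0 by simp
    then show ?thesis using ba by (simp add: mult_nonpos_nonpos)
  qed
qed

definition "Wf \<nu> a u = (1-\<nu>)*a + \<nu>*u"
definition "Hf \<nu> a u = a*ln a/\<nu> - u*ln u/(1-\<nu>) + ((1-\<nu>)*a + \<nu>*u) * ln ((1-\<nu>)*a + \<nu>*u)/(\<nu>*(1-\<nu>)*(2*\<nu>-1)) - 4*(((a+u)/2) * ln ((a+u)/2))/(2*\<nu>-1)"
definition "H1 \<nu> a u = 0 - (ln u + 1)/(1-\<nu>) + (ln ((1-\<nu>)*a + \<nu>*u) + 1) * \<nu>/(\<nu>*(1-\<nu>)*(2*\<nu>-1)) - 4*((ln ((a+u)/2) + 1) * (1/2))/(2*\<nu>-1)"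
definition "H2 \<nu> a u = 0 - (1/u)/(1-\<nu>) + (\<nu>/((1-\<nu>)*a + \<nu>*u)) * \<nu>/(\<nu>*(1-\<nu>)*(2*\<nu>-1)) - 4*((1/(a+u)) * (1/2))/(2*\<nu>-1)"
definition "Lf \<nu> a u = ln(Wf \<nu> a u) - (1-\<nu>)*ln a - \<nu>*ln u"
definition "L1 \<nu> a u = \<nu>/Wf \<nu> a u - \<nu>/u"
definition "L2 \<nu> a u = \<nu>/u^2 - \<nu>^2/(Wf \<nu> a u)^2"
definition "kf a u = 2*ln((a+u)/2) - ln a - ln u"
definition "k1 a u = 2/(a+u) - 1/u"
definition "k2 a u = 1/u^2 - 2/(a+u)^2"

lemma Wf_pos:
  fixes a \<nu> u :: real
  assumes "a > 0" "0 < \<nu>" "\<nu> < 1" "u > 0"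
  shows "Wf \<nu> a u > 0"
proof -
  have "0 < 1 - \<nu>" using assms by simp
  then have "(1-\<nu>)*a > 0" "\<nu>*u > 0" using assms by (simp_all add: mult_pos_pos)
  then show ?thesis unfolding Wf_def by linarith
qed

lemma xlnx_deriv: "x > 0 \<Longrightarrow> ((\<lambda>x. x * ln x) has_real_derivative ln x + 1) (at x)"
  by (auto intro!: derivative_eq_intros)

lemma H_deriv:
  assumes a: "a > 0" and n: "0 < \<nu>" "\<nu> < 1" "\<nu> \<noteq> 1/2" and u: "u > 0"
  shows "(Hf \<nu> a has_real_derivative H1 \<nu> a u) (at u)"
proof -
  have W: "(1-\<nu>)*a + \<nu>*u > 0" using Wf_pos[OF a n(1,2) u] unfolding Wf_def .
  have d1: "1 - \<nu> \<noteq> 0" "2*\<nu> - 1 \<noteq> 0" "\<nu> \<noteq> 0" using n by auto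
  have e1: "((\<lambda>u. ((1-\<nu>)*a + \<nu>*u) * ln ((1-\<nu>)*a + \<nu>*u)) has_real_derivative (ln ((1-\<nu>)*a + \<nu>*u) + 1) * \<nu>) (at u)"
    using W by (auto intro!: derivative_eq_intros) (simp add: distrib_right)
  have e2: "((\<lambda>u. ((a+u)/2) * ln ((a+u)/2)) has_real_derivative (ln ((a+u)/2) + 1) * (1/2)) (at u)"
    using a u by (auto intro!: derivative_eq_intros) (simp add: field_simps)
  have e3: "((\<lambda>u. u * ln u) has_real_derivative ln u + 1) (at u)" using xlnx_deriv[OF u] .
  have "((\<lambda>u. a*ln a/\<nu> - u*ln u/(1-\<nu>) + ((1-\<nu>)*a + \<nu>*u) * ln ((1-\<nu>)*a + \<nu>*u)/(\<nu>*(1-\<nu>)*(2*\<nu>-1)) - 4*(((a+u)/2) * ln ((a+u)/2))/(2*\<nu>-1))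
     has_real_derivative (0 - (ln u + 1)/(1-\<nu>) + (ln ((1-\<nu>)*a + \<nu>*u) + 1) * \<nu>/(\<nu>*(1-\<nu>)*(2*\<nu>-1)) - 4*((ln ((a+u)/2) + 1) * (1/2))/(2*\<nu>-1))) (at u)"
    by (intro DERIV_diff DERIV_add DERIV_cdivide DERIV_cmult e1 e2 e3 DERIV_const)
  moreover have "\<And>u. a*ln a/\<nu> - u*ln u/(1-\<nu>) + ((1-\<nu>)*a + \<nu>*u) * ln ((1-\<nu>)*a + \<nu>*u)/(\<nu>*(1-\<nu>)*(2*\<nu>-1)) - 4*(((a+u)/2) * ln ((a+u)/2))/(2*\<nu>-1) = Hf \<nu> a u"
    unfolding Hf_def by simp
  moreover have "(0 - (ln u + 1)/(1-\<nu>) + (ln ((1-\<nu>)*a + \<nu>*u) + 1) * \<nu>/(\<nu>*(1-\<nu>)*(2*\<nu>-1)) - 4*((ln ((a+u)/2) + 1) * (1/2))/(2*\<nu>-1)) = H1 \<nu> a u"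
    unfolding H1_def by simp
  ultimately show ?thesis by simp
qed

lemma H1_deriv:
  assumes a: "a > 0" and n: "0 < \<nu>" "\<nu> < 1" and u: "u > 0"
  shows "(H1 \<nu> a has_real_derivative H2 \<nu> a u) (at u)"
proof -
  have W: "(1-\<nu>)*a + \<nu>*u > 0" using Wf_pos[OF a n(1,2) u] unfolding Wf_def .
  have e1: "((\<lambda>u. ln ((1-\<nu>)*a + \<nu>*u) + 1) has_real_derivative \<nu>/((1-\<nu>)*a + \<nu>*u)) (at u)"
    using W by (auto intro!: derivative_eq_intros)
  have e2: "((\<lambda>u. ln ((a+u)/2) + 1) has_real_derivative 1/(a+u)) (at u)"
    using a u by (auto intro!: derivative_eq_intros simp: field_simps)
  have e3: "((\<lambda>u. ln u + 1) has_real_derivative 1/u) (at u)" using u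
    by (auto intro!: derivative_eq_intros)
  show ?thesis unfolding H1_def H2_def
    by (intro DERIV_diff DERIV_add DERIV_cdivide DERIV_cmult DERIV_cmult_right e1 e2 e3 DERIV_const)
qed

lemma L_deriv:
  assumes a: "a > 0" and n: "0 < \<nu>" "\<nu> < 1" and u: "u > 0"
  shows "(Lf \<nu> a has_real_derivative L1 \<nu> a u) (at u)"
  using Wf_pos[OF a n(1,2) u] u unfolding Lf_def L1_def Wf_def
  by (auto intro!: derivative_eq_intros simp: field_simps)

lemma L1_deriv:
  assumes a: "a > 0" and n: "0 < \<nu>" "\<nu> < 1" and u: "u > 0"
  shows "(L1 \<nu> a has_real_derivative L2 \<nu> a u) (at u)"
  using Wf_pos[OF a n(1,2) u] u unfolding L2_def L1_def Wf_def
  by (auto intro!: derivative_eq_intros simp: field_simps power2_eq_square)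

lemma k_deriv:
  assumes a: "a > 0" and u: "u > 0"
  shows "(kf a has_real_derivative k1 a u) (at u)"
  using a u unfolding kf_def k1_def
  by (auto intro!: derivative_eq_intros simp: field_simps)

lemma k1_deriv:
  assumes a: "a > 0" and u: "u > 0"
  shows "(k1 a has_real_derivative k2 a u) (at u)"
  using a u unfolding k2_def k1_def
  by (auto intro!: derivative_eq_intros simp: field_simps power2_eq_square)

definition "Ff p q \<nu> a u = (u-a)*Lf \<nu> a u - p*Hf \<nu> a u - q*((u-a)*kf a u)"
definition "F1 p q \<nu> a u = (Lf \<nu> a u + (u-a)*L1 \<nu> a u) - p*H1 \<nu> a u - q*(kf a u + (u-a)*k1 a u)"
definition "F2 p q \<nu> a u = (2*L1 \<nu> a u + (u-a)*L2 \<nu> a u) - p*H2 \<nu> a u - q*(2*k1 a u + (u-a)*k2 a u)"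

lemma F_deriv:
  assumes a: "a > 0" and n: "0 < \<nu>" "\<nu> < 1" "\<nu> \<noteq> 1/2" and u: "u > 0"
  shows "(Ff p q \<nu> a has_real_derivative F1 p q \<nu> a u) (at u)"
proof -
  have i: "((\<lambda>u. u - a) has_real_derivative 1 - 0) (at u)" by (intro DERIV_diff DERIV_ident DERIV_const)
  have "((\<lambda>u. (u-a)*Lf \<nu> a u - p*Hf \<nu> a u - q*((u-a)*kf a u)) has_real_derivative
     ((u-a)*L1 \<nu> a u + (1-0)*Lf \<nu> a u) - p*H1 \<nu> a u - q*((u-a)*k1 a u + (1-0)*kf a u)) (at u)"
    by (intro DERIV_diff DERIV_cmult DERIV_mult'[OF i L_deriv[OF a n(1,2) u]] H_deriv[OF a n u] DERIV_mult'[OF i k_deriv[OF a u]])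
  then show ?thesis unfolding Ff_def F1_def by (simp add: ac_simps)
qed

lemma F1_deriv:
  assumes a: "a > 0" and n: "0 < \<nu>" "\<nu> < 1" and u: "u > 0"
  shows "(F1 p q \<nu> a has_real_derivative F2 p q \<nu> a u) (at u)"
proof -
  have i: "((\<lambda>u. u - a) has_real_derivative 1 - 0) (at u)" by (intro DERIV_diff DERIV_ident DERIV_const)
  have "((\<lambda>u. (Lf \<nu> a u + (u-a)*L1 \<nu> a u) - p*H1 \<nu> a u - q*(kf a u + (u-a)*k1 a u)) has_real_derivative
     (L1 \<nu> a u + ((u-a)*L2 \<nu> a u + (1-0)*L1 \<nu> a u)) - p*H2 \<nu> a u - q*(k1 a u + ((u-a)*k2 a u + (1-0)*k1 a u))) (at u)"
    by (intro DERIV_diff DERIV_add DERIV_cmult DERIV_mult'[OF i L1_deriv[OF a n u]] L_deriv[OF a n u]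
       H1_deriv[OF a n u] k_deriv[OF a u] DERIV_mult'[OF i k1_deriv[OF a u]])
  then show ?thesis unfolding F1_def F2_def by (simp add: algebra_simps)
qed

lemma F_at_a:
  fixes a \<nu> p q :: real
  assumes a: "a > 0" and n: "0 < \<nu>" "\<nu> < 1" "\<nu> \<noteq> 1/2"
  shows "Ff p q \<nu> a a = 0" "F1 p q \<nu> a a = 0" "Hf \<nu> a a = 0" "H1 \<nu> a a = 0"
proof -
  have d1: "1 - \<nu> \<noteq> 0" "2*\<nu> - 1 \<noteq> 0" "\<nu> \<noteq> 0" using n by auto
  have d2: "(1-\<nu>)*(2*\<nu>-1) \<noteq> 0" "\<nu>*(1-\<nu>)*(2*\<nu>-1) \<noteq> 0" using d1 by auto
  have W: "(1-\<nu>)*a + \<nu>*a = a" by (simp add: algebra_simps)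
  have M: "(a+a)/2 = a" by simp
  have "Hf \<nu> a a = a*ln a * (1/\<nu> - 1/(1-\<nu>) + 1/(\<nu>*(1-\<nu>)*(2*\<nu>-1)) - 4/(2*\<nu>-1))"
    unfolding Hf_def W M by (simp add: algebra_simps)
  also have "1/\<nu> - 1/(1-\<nu>) + 1/(\<nu>*(1-\<nu>)*(2*\<nu>-1)) - 4/(2*\<nu>-1) = 0"
    using d1 by (simp add: field_simps; simp add: algebra_simps)
  finally have H: "Hf \<nu> a a = 0" by simp
  have H1: "H1 \<nu> a a = 0"
  proof -
    define l where "l = ln a + 1"
    have "H1 \<nu> a a = 0 - l/(1-\<nu>) + l * \<nu>/(\<nu>*(1-\<nu>)*(2*\<nu>-1)) - 4*(l * (1/2))/(2*\<nu>-1)"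
      unfolding H1_def W M l_def by simp
    also have "... = 0 - l/(1-\<nu>) + l/((1-\<nu>)*(2*\<nu>-1)) - 2*l/(2*\<nu>-1)"
      using d1 by simp
    also have "... = l * ((0 - (2*\<nu>-1) + 1 - 2*(1-\<nu>))/((1-\<nu>)*(2*\<nu>-1)))"
    proof -
      define A where "A = 1 - \<nu>"
      define B where "B = 2*\<nu> - 1"
      have "A \<noteq> 0" "B \<noteq> 0" using d1 A_def B_def by auto
      then show ?thesis unfolding A_def[symmetric] B_def[symmetric] by (simp add: field_simps)
    qed
    also have "... = 0" by simp
    finally show ?thesis .
  qed
  have L: "Lf \<nu> a a = 0" unfolding Lf_def Wf_def W by (simp add: algebra_simps)
  have k: "kf a a = 0" unfolding kf_def by simp
  show "Hf \<nu> a a = 0" by (rule H)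
  show "H1 \<nu> a a = 0" by (rule H1)
  show "Ff p q \<nu> a a = 0" unfolding Ff_def using H by simp
  show "F1 p q \<nu> a a = 0" unfolding F1_def using H1 L k by simp
qed

lemma H2_eq:
  fixes a \<nu> u :: real
  assumes a: "a > 0" and n: "0 < \<nu>" "\<nu> < 1" "\<nu> \<noteq> 1/2" and u: "u > 0"
  shows "H2 \<nu> a u = a*(u-a)/(u*((1-\<nu>)*a + \<nu>*u)*(a+u))"
proof -
  define W where "W = (1-\<nu>)*a + \<nu>*u"
  define S where "S = a + u"
  define A where "A = 1 - \<nu>"
  define B where "B = 2*\<nu> - 1"
  have W0: "W \<noteq> 0" using Wf_pos[OF a n(1,2) u] unfolding Wf_def W_def by simp
  have S0: "S \<noteq> 0" using a u S_def by simp
  have A0: "A \<noteq> 0" using n A_def by simp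
  have B0: "B \<noteq> 0" using n B_def by simp
  have u0: "u \<noteq> 0" using u by simp
  have n0: "\<nu> \<noteq> 0" using n by simp
  have "H2 \<nu> a u = 0 - (1/u)/A + (\<nu>/W) * \<nu>/(\<nu>*A*B) - 4*((1/S) * (1/2))/B"
    unfolding H2_def A_def B_def W_def S_def by simp
  also have "... = (- W*S*B + \<nu>*u*S - 2*u*W*A)/(u*W*S*A*B)"
    using A0 B0 W0 S0 u0 n0 by (simp add: field_simps)
  also have "- W*S*B + \<nu>*u*S - 2*u*W*A = A*B*a*(u-a)"
    unfolding W_def S_def A_def B_def by (simp add: algebra_simps)
  finally have "H2 \<nu> a u = (A*B)*(a*(u-a))/((A*B)*(u*W*S))" by (simp add: ac_simps)
  then have "H2 \<nu> a u = a*(u-a)/(u*W*S)" using A0 B0 by simp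
  then show ?thesis unfolding W_def S_def .
qed

lemma la_nonneg:
  fixes a b \<nu> :: real
  assumes a: "a > 0" and b: "b > 0" and ab: "a \<noteq> b" and n: "0 < \<nu>" "\<nu> < 1" "\<nu> \<noteq> 1/2"
  shows "Hf \<nu> a b / (b - a) \<ge> 0"
proof -
  have "(b - a) * Hf \<nu> a b \<ge> 0"
  proof (rule sign_lemma[OF a b])
    show "\<And>u. u > 0 \<Longrightarrow> (Hf \<nu> a has_real_derivative H1 \<nu> a u) (at u)"
      using H_deriv[OF a n] by blast
    show "\<And>u. u > 0 \<Longrightarrow> (H1 \<nu> a has_real_derivative H2 \<nu> a u) (at u)"
      using H1_deriv[OF a n(1,2)] by blast
    show "Hf \<nu> a a = 0" "H1 \<nu> a a = 0" using F_at_a[OF a n] by auto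
    fix u :: real assume u: "u > 0"
    have W: "(1-\<nu>)*a + \<nu>*u > 0" using Wf_pos[OF a n(1,2) u] unfolding Wf_def .
    have "(u-a)*H2 \<nu> a u = a*((u-a)*(u-a))/(u*((1-\<nu>)*a + \<nu>*u)*(a+u))"
      unfolding H2_eq[OF a n u] by simp
    also have "... \<ge> 0" using a u W by simp
    finally show "(u-a)*H2 \<nu> a u \<ge> 0" .
  qed
  then show ?thesis using ab
    by (cases "b > a") (auto simp: zero_le_mult_iff zero_le_divide_iff)
qed

definition "P0 \<nu> a u = \<nu>*(a+u)^2*(2*(1-\<nu>)*u*((1-\<nu>)*a + \<nu>*u) + ((1-\<nu>)*a + \<nu>*u)^2 - \<nu>*u^2)"
definition "P1 \<nu> a u = a*u*((1-\<nu>)*a + \<nu>*u)*(a+u)"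
definition "P2 \<nu> a u = ((1-\<nu>)*a + \<nu>*u)^2*(2*u*(a+u) + (a+u)^2 - 2*u^2)"

lemma F2_id:
  fixes a \<nu> u p q :: real
  assumes a: "a > 0" and n: "0 < \<nu>" "\<nu> < 1" "\<nu> \<noteq> 1/2" and u: "u > 0"
  shows "F2 p q \<nu> a u * (u^2*((1-\<nu>)*a + \<nu>*u)^2*(a+u)^2) = (u-a)*(P0 \<nu> a u - p*P1 \<nu> a u - q*P2 \<nu> a u)"
proof -
  define W where "W = (1-\<nu>)*a + \<nu>*u"
  define S where "S = a + u"
  define A where "A = 1 - \<nu>"
  define B where "B = 2*\<nu> - 1"
  have W0: "W \<noteq> 0" using Wf_pos[OF a n(1,2) u] unfolding Wf_def W_def by simp
  have S0: "S \<noteq> 0" using a u S_def by simp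
  have A0: "A \<noteq> 0" using n A_def by simp
  have B0: "B \<noteq> 0" using n B_def by simp
  have u0: "u \<noteq> 0" using u by simp
  have n0: "\<nu> \<noteq> 0" using n by simp
  have i: "(2*L1 \<nu> a u + (u-a)*L2 \<nu> a u)*(u^2*W^2) = (u-a)*\<nu>*(2*(1-\<nu>)*u*W + W^2 - \<nu>*u^2)"
  proof -
    have "(2*L1 \<nu> a u + (u-a)*L2 \<nu> a u)*(u^2*W^2) = 2*\<nu>*u*W*(u - W) + (u-a)*(\<nu>*W^2 - \<nu>^2*u^2)"
      unfolding L1_def L2_def Wf_def W_def[symmetric] using W0 u0 by (simp add: field_simps power2_eq_square)
    also have "u - W = (1-\<nu>)*(u-a)" unfolding W_def by (simp add: algebra_simps)
    finally show ?thesis by (simp add: algebra_simps power2_eq_square)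
  qed
  have ii: "H2 \<nu> a u * (u*W*S) = a*(u-a)"
  proof -
    have "H2 \<nu> a u = 0 - (1/u)/A + (\<nu>/W) * \<nu>/(\<nu>*A*B) - 4*((1/S) * (1/2))/B"
      unfolding H2_def A_def B_def W_def S_def by simp
    also have "... = (- W*S*B + \<nu>*u*S - 2*u*W*A)/(u*W*S*A*B)"
      using A0 B0 W0 S0 u0 n0 by (simp add: field_simps)
    also have "- W*S*B + \<nu>*u*S - 2*u*W*A = A*B*a*(u-a)"
      unfolding W_def S_def A_def B_def by (simp add: algebra_simps)
    finally have "H2 \<nu> a u = (A*B)*(a*(u-a))/((A*B)*(u*W*S))" by (simp add: ac_simps)
    then have "H2 \<nu> a u = a*(u-a)/(u*W*S)" using A0 B0 by simp
    then show ?thesis using W0 S0 u0 by simp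
  qed
  have iii: "(2*k1 a u + (u-a)*k2 a u)*(u^2*S^2) = (u-a)*(2*u*S + S^2 - 2*u^2)"
  proof -
    have "(2*k1 a u + (u-a)*k2 a u)*(u^2*S^2) = 2*u*S*(2*u - S) + (u-a)*(S^2 - 2*u^2)"
      unfolding k1_def k2_def S_def[symmetric] using S0 u0 by (simp add: field_simps power2_eq_square)
    also have "2*u - S = u - a" unfolding S_def by simp
    finally show ?thesis by (simp add: algebra_simps power2_eq_square)
  qed
  have "F2 p q \<nu> a u * (u^2*W^2*S^2) = (2*L1 \<nu> a u + (u-a)*L2 \<nu> a u)*(u^2*W^2) * S^2
     - p * (H2 \<nu> a u * (u*W*S)) * (u*W*S) - q * ((2*k1 a u + (u-a)*k2 a u)*(u^2*S^2)) * W^2"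
    unfolding F2_def by (simp add: algebra_simps power2_eq_square)
  also have "... = (u-a)*(P0 \<nu> a u - p*P1 \<nu> a u - q*P2 \<nu> a u)"
    unfolding i ii iii P0_def P1_def P2_def W_def[symmetric] S_def[symmetric]
    by (simp add: algebra_simps power2_eq_square)
  finally show ?thesis unfolding W_def S_def .
qed

lemma D_pos:
  fixes a \<nu> u :: real
  assumes a: "a > 0" and n: "0 < \<nu>" "\<nu> < 1" and u: "u > 0"
  shows "u^2*((1-\<nu>)*a + \<nu>*u)^2*(a+u)^2 > 0"
  using Wf_pos[OF a n u] a u unfolding Wf_def by simp

lemma main_lower:
  fixes a b \<nu> p q :: real
  assumes a: "a > 0" and b: "b > 0" and ab: "a \<noteq> b" and n: "0 < \<nu>" "\<nu> < 1" "\<nu> \<noteq> 1/2"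
    and Q: "\<And>u. u > 0 \<Longrightarrow> P0 \<nu> a u - p*P1 \<nu> a u - q*P2 \<nu> a u \<ge> 0"
  shows "p * (Hf \<nu> a b/(b-a)) + q * kf a b \<le> Lf \<nu> a b"
proof -
  have "(b - a) * Ff p q \<nu> a b \<ge> 0"
  proof (rule sign_lemma[OF a b])
    show "\<And>u. u > 0 \<Longrightarrow> (Ff p q \<nu> a has_real_derivative F1 p q \<nu> a u) (at u)"
      using F_deriv[OF a n] by blast
    show "\<And>u. u > 0 \<Longrightarrow> (F1 p q \<nu> a has_real_derivative F2 p q \<nu> a u) (at u)"
      using F1_deriv[OF a n(1,2)] by blast
    show "Ff p q \<nu> a a = 0" "F1 p q \<nu> a a = 0" using F_at_a[OF a n] by auto
    fix u :: real assume u: "u > 0"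
    define D where "D = u^2*((1-\<nu>)*a + \<nu>*u)^2*(a+u)^2"
    have D: "D > 0" using D_pos[OF a n(1,2) u] D_def by simp
    have "F2 p q \<nu> a u = (u-a)*(P0 \<nu> a u - p*P1 \<nu> a u - q*P2 \<nu> a u)/D"
      using F2_id[OF a n u, of p q] D unfolding D_def[symmetric] by (simp add: field_simps)
    then have "(u-a)*F2 p q \<nu> a u = (u-a)^2*(P0 \<nu> a u - p*P1 \<nu> a u - q*P2 \<nu> a u)/D"
      by (simp add: power2_eq_square)
    also have "... \<ge> 0" using Q[OF u] D by simp
    finally show "(u-a)*F2 p q \<nu> a u \<ge> 0" .
  qed
  then have "(b-a)*((b-a)*Lf \<nu> a b - p*Hf \<nu> a b - q*((b-a)*kf a b)) \<ge> 0" unfolding Ff_def by simp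
  moreover have "(b-a)*((b-a)*Lf \<nu> a b - p*Hf \<nu> a b - q*((b-a)*kf a b)) = (b-a)^2*(Lf \<nu> a b - p*(Hf \<nu> a b/(b-a)) - q*kf a b)"
  proof -
    define d where "d = b - a"
    have "d \<noteq> 0" using ab d_def by simp
    then show ?thesis unfolding d_def[symmetric] by (simp add: field_simps power2_eq_square)
  qed
  ultimately have "(b-a)^2*(Lf \<nu> a b - p*(Hf \<nu> a b/(b-a)) - q*kf a b) \<ge> 0" by simp
  moreover have "(b-a)^2 > 0" using ab by simp
  ultimately have "Lf \<nu> a b - p*(Hf \<nu> a b/(b-a)) - q*kf a b \<ge> 0"
    by (simp add: zero_le_mult_iff)
  then show ?thesis by simp
qed

lemma main_upper:
  fixes a b \<nu> p q :: real
  assumes a: "a > 0" and b: "b > 0" and ab: "a \<noteq> b" and n: "0 < \<nu>" "\<nu> < 1" "\<nu> \<noteq> 1/2"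
    and Q: "\<And>u. u > 0 \<Longrightarrow> P0 \<nu> a u - p*P1 \<nu> a u - q*P2 \<nu> a u \<le> 0"
  shows "Lf \<nu> a b \<le> p * (Hf \<nu> a b/(b-a)) + q * kf a b"
proof -
  have "(b - a) * (- Ff p q \<nu> a b) \<ge> 0"
  proof (rule sign_lemma[OF a b])
    show "\<And>u. u > 0 \<Longrightarrow> ((\<lambda>u. - Ff p q \<nu> a u) has_real_derivative - F1 p q \<nu> a u) (at u)"
      using F_deriv[OF a n] by (blast intro: DERIV_minus)
    show "\<And>u. u > 0 \<Longrightarrow> ((\<lambda>u. - F1 p q \<nu> a u) has_real_derivative - F2 p q \<nu> a u) (at u)"
      using F1_deriv[OF a n(1,2)] by (blast intro: DERIV_minus)
    show "- Ff p q \<nu> a a = 0" "- F1 p q \<nu> a a = 0" using F_at_a[OF a n] by auto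
    fix u :: real assume u: "u > 0"
    define D where "D = u^2*((1-\<nu>)*a + \<nu>*u)^2*(a+u)^2"
    have D: "D > 0" using D_pos[OF a n(1,2) u] D_def by simp
    have "F2 p q \<nu> a u = (u-a)*(P0 \<nu> a u - p*P1 \<nu> a u - q*P2 \<nu> a u)/D"
      using F2_id[OF a n u, of p q] D unfolding D_def[symmetric] by (simp add: field_simps)
    then have "(u-a)*(- F2 p q \<nu> a u) = (u-a)^2*(-(P0 \<nu> a u - p*P1 \<nu> a u - q*P2 \<nu> a u))/D"
    proof -
      assume e: "F2 p q \<nu> a u = (u-a)*(P0 \<nu> a u - p*P1 \<nu> a u - q*P2 \<nu> a u)/D"
      define Qx where "Qx = P0 \<nu> a u - p*P1 \<nu> a u - q*P2 \<nu> a u"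
      show ?thesis unfolding e Qx_def[symmetric] by (simp add: power2_eq_square)
    qed
    also have "... \<ge> 0" using Q[OF u] D by simp
    finally show "(u-a)*(- F2 p q \<nu> a u) \<ge> 0" .
  qed
  then have "(b - a) * Ff p q \<nu> a b \<le> 0" by (simp only: mult_minus_right)
  then have "(b-a)*((b-a)*Lf \<nu> a b - p*Hf \<nu> a b - q*((b-a)*kf a b)) \<le> 0" unfolding Ff_def .
  moreover have "(b-a)*((b-a)*Lf \<nu> a b - p*Hf \<nu> a b - q*((b-a)*kf a b)) = (b-a)^2*(Lf \<nu> a b - p*(Hf \<nu> a b/(b-a)) - q*kf a b)"
  proof -
    define d where "d = b - a"
    have "d \<noteq> 0" using ab d_def by simp
    then show ?thesis unfolding d_def[symmetric] by (simp add: field_simps power2_eq_square)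
  qed
  ultimately have "(b-a)^2*(Lf \<nu> a b - p*(Hf \<nu> a b/(b-a)) - q*kf a b) \<le> 0" by simp
  moreover have "(b-a)^2 > 0" using ab by simp
  ultimately have "Lf \<nu> a b - p*(Hf \<nu> a b/(b-a)) - q*kf a b \<le> 0"
    by (simp add: mult_le_0_iff)
  then show ?thesis by simp
qed

lemma quartic_nonneg:
  fixes c0 c1 c2 c3 c4 a u :: real
  assumes "c0 \<ge> 0" "c1 \<ge> 0" "c2 \<ge> 0" "c3 \<ge> 0" "c4 \<ge> 0" "a \<ge> 0" "u \<ge> 0"
  shows "c0*a^4*u^0 + c1*a^3*u^1 + c2*a^2*u^2 + c3*a^1*u^3 + c4*a^0*u^4 \<ge> 0"
  using assms by (intro add_nonneg_nonneg mult_nonneg_nonneg zero_le_power; simp)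

lemma low1_c0:
  fixes \<nu> :: real assumes "0 < \<nu>" "\<nu> < 1/2"
  shows "((1/2) - 1*\<nu> + (1/2)*\<nu>^2) \<ge> 0"
proof -
  have X: "0 \<le> (2*\<nu>)" "0 \<le> (1-2*\<nu>)" using assms by simp_all
  have "((1/2) - 1*\<nu> + (1/2)*\<nu>^2) = (1/2)*(2*\<nu>)^0*(1-2*\<nu>)^2 + (1/2)*(2*\<nu>)^1*(1-2*\<nu>)^1 + (1/8)*(2*\<nu>)^2*(1-2*\<nu>)^0" by algebra
  also have "... \<ge> 0" using X by (intro add_nonneg_nonneg mult_nonneg_nonneg zero_le_power; simp)
  finally show ?thesis .
qed

lemma low1_c1:
  fixes \<nu> :: real assumes "0 < \<nu>" "\<nu> < 1/2"
  shows "(1*\<nu> - 1*\<nu>^2) \<ge> 0"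
proof -
  have X: "0 \<le> (2*\<nu>)" "0 \<le> (1-2*\<nu>)" using assms by simp_all
  have "(1*\<nu> - 1*\<nu>^2) = (1/2)*(2*\<nu>)^1*(1-2*\<nu>)^1 + (1/4)*(2*\<nu>)^2*(1-2*\<nu>)^0" by algebra
  also have "... \<ge> 0" using X by (intro add_nonneg_nonneg mult_nonneg_nonneg zero_le_power; simp)
  finally show ?thesis .
qed

lemma low1_c2:
  fixes \<nu> :: real assumes "0 < \<nu>" "\<nu> < 1/2"
  shows "((13/2) - 25*\<nu> + 31*\<nu>^2 - 12*\<nu>^3) \<ge> 0"
proof -
  have X: "0 \<le> (2*\<nu>)" "0 \<le> (1-2*\<nu>)" using assms by simp_all
  have "((13/2) - 25*\<nu> + 31*\<nu>^2 - 12*\<nu>^3) = (13/2)*(2*\<nu>)^0*(1-2*\<nu>)^3 + 7*(2*\<nu>)^1*(1-2*\<nu>)^2 + (9/4)*(2*\<nu>)^2*(1-2*\<nu>)^1 + (1/4)*(2*\<nu>)^3*(1-2*\<nu>)^0" by algebra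
  also have "... \<ge> 0" using X by (intro add_nonneg_nonneg mult_nonneg_nonneg zero_le_power; simp)
  finally show ?thesis .
qed

lemma low1_c3:
  fixes \<nu> :: real assumes "0 < \<nu>" "\<nu> < 1/2"
  shows "(4 - 9*\<nu> - 1*\<nu>^2 + 8*\<nu>^3) \<ge> 0"
proof -
  have X: "0 \<le> (2*\<nu>)" "0 \<le> (1-2*\<nu>)" using assms by simp_all
  have "(4 - 9*\<nu> - 1*\<nu>^2 + 8*\<nu>^3) = 4*(2*\<nu>)^0*(1-2*\<nu>)^3 + (15/2)*(2*\<nu>)^1*(1-2*\<nu>)^2 + (11/4)*(2*\<nu>)^2*(1-2*\<nu>)^1 + (1/4)*(2*\<nu>)^3*(1-2*\<nu>)^0" by algebra
  also have "... \<ge> 0" using X by (intro add_nonneg_nonneg mult_nonneg_nonneg zero_le_power; simp)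
  finally show ?thesis .
qed

lemma low1_c4:
  fixes \<nu> :: real assumes "0 < \<nu>" "\<nu> < 1/2"
  shows "(2*\<nu> - (11/2)*\<nu>^2 + 4*\<nu>^3) \<ge> 0"
proof -
  have X: "0 \<le> (2*\<nu>)" "0 \<le> (1-2*\<nu>)" using assms by simp_all
  have "(2*\<nu> - (11/2)*\<nu>^2 + 4*\<nu>^3) = 1*(2*\<nu>)^1*(1-2*\<nu>)^2 + (5/8)*(2*\<nu>)^2*(1-2*\<nu>)^1 + (1/8)*(2*\<nu>)^3*(1-2*\<nu>)^0" by algebra
  also have "... \<ge> 0" using X by (intro add_nonneg_nonneg mult_nonneg_nonneg zero_le_power; simp)
  finally show ?thesis .
qed

lemma low1_pos:
  fixes \<nu> a u :: real assumes "0 < \<nu>" "\<nu> < 1/2" "a > 0" "u > 0"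
  shows "((1/2) - 1*\<nu> + (1/2)*\<nu>^2)*a^4*u^0 + (1*\<nu> - 1*\<nu>^2)*a^3*u^1 + ((13/2) - 25*\<nu> + 31*\<nu>^2 - 12*\<nu>^3)*a^2*u^2 + (4 - 9*\<nu> - 1*\<nu>^2 + 8*\<nu>^3)*a^1*u^3 + (2*\<nu> - (11/2)*\<nu>^2 + 4*\<nu>^3)*a^0*u^4 \<ge> 0"
  by (rule quartic_nonneg[OF low1_c0[OF assms(1,2)] low1_c1[OF assms(1,2)] low1_c2[OF assms(1,2)] low1_c3[OF assms(1,2)] low1_c4[OF assms(1,2)]]) (use assms in auto)

lemma up1_c0:
  fixes \<nu> :: real assumes "0 < \<nu>" "\<nu> < 1/2"
  shows "(2 - (19/2)*\<nu> + 17*\<nu>^2 - (27/2)*\<nu>^3 + 4*\<nu>^4) \<ge> 0"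
proof -
  have X: "0 \<le> (2*\<nu>)" "0 \<le> (1-2*\<nu>)" using assms by simp_all
  have "(2 - (19/2)*\<nu> + 17*\<nu>^2 - (27/2)*\<nu>^3 + 4*\<nu>^4) = 2*(2*\<nu>)^0*(1-2*\<nu>)^4 + (13/4)*(2*\<nu>)^1*(1-2*\<nu>)^3 + 2*(2*\<nu>)^2*(1-2*\<nu>)^2 + (9/16)*(2*\<nu>)^3*(1-2*\<nu>)^1 + (1/16)*(2*\<nu>)^4*(1-2*\<nu>)^0" by algebra
  also have "... \<ge> 0" using X by (intro add_nonneg_nonneg mult_nonneg_nonneg zero_le_power; simp)
  finally show ?thesis .
qed

lemma up1_c1:
  fixes \<nu> :: real assumes "0 < \<nu>" "\<nu> < 1/2"
  shows "(10 - 40*\<nu> + 59*\<nu>^2 - 37*\<nu>^3 + 8*\<nu>^4) \<ge> 0"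
proof -
  have X: "0 \<le> (2*\<nu>)" "0 \<le> (1-2*\<nu>)" using assms by simp_all
  have "(10 - 40*\<nu> + 59*\<nu>^2 - 37*\<nu>^3 + 8*\<nu>^4) = 10*(2*\<nu>)^0*(1-2*\<nu>)^4 + 20*(2*\<nu>)^1*(1-2*\<nu>)^3 + (59/4)*(2*\<nu>)^2*(1-2*\<nu>)^2 + (39/8)*(2*\<nu>)^3*(1-2*\<nu>)^1 + (5/8)*(2*\<nu>)^4*(1-2*\<nu>)^0" by algebra
  also have "... \<ge> 0" using X by (intro add_nonneg_nonneg mult_nonneg_nonneg zero_le_power; simp)
  finally show ?thesis .
qed

lemma up1_c2:
  fixes \<nu> :: real assumes "0 < \<nu>" "\<nu> < 1/2"
  shows "(4 - (11/2)*\<nu> - 9*\<nu>^2 + 23*\<nu>^3 - 12*\<nu>^4) \<ge> 0"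
proof -
  have X: "0 \<le> (2*\<nu>)" "0 \<le> (1-2*\<nu>)" using assms by simp_all
  have "(4 - (11/2)*\<nu> - 9*\<nu>^2 + 23*\<nu>^3 - 12*\<nu>^4) = 4*(2*\<nu>)^0*(1-2*\<nu>)^4 + (53/4)*(2*\<nu>)^1*(1-2*\<nu>)^3 + (27/2)*(2*\<nu>)^2*(1-2*\<nu>)^2 + (49/8)*(2*\<nu>)^3*(1-2*\<nu>)^1 + (9/8)*(2*\<nu>)^4*(1-2*\<nu>)^0" by algebra
  also have "... \<ge> 0" using X by (intro add_nonneg_nonneg mult_nonneg_nonneg zero_le_power; simp)
  finally show ?thesis .
qed

lemma up1_c3:
  fixes \<nu> :: real assumes "0 < \<nu>" "\<nu> < 1/2"
  shows "(2*\<nu> - 3*\<nu>^2 + 3*\<nu>^3) \<ge> 0"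
proof -
  have X: "0 \<le> (2*\<nu>)" "0 \<le> (1-2*\<nu>)" using assms by simp_all
  have "(2*\<nu> - 3*\<nu>^2 + 3*\<nu>^3) = 1*(2*\<nu>)^1*(1-2*\<nu>)^2 + (5/4)*(2*\<nu>)^2*(1-2*\<nu>)^1 + (5/8)*(2*\<nu>)^3*(1-2*\<nu>)^0" by algebra
  also have "... \<ge> 0" using X by (intro add_nonneg_nonneg mult_nonneg_nonneg zero_le_power; simp)
  finally show ?thesis .
qed

lemma up1_c4:
  fixes \<nu> :: real assumes "0 < \<nu>" "\<nu> < 1/2"
  shows "((1/2)*\<nu>^3) \<ge> 0"
proof -
  have X: "0 \<le> (2*\<nu>)" "0 \<le> (1-2*\<nu>)" using assms by simp_all
  have "((1/2)*\<nu>^3) = (1/16)*(2*\<nu>)^3*(1-2*\<nu>)^0" by algebra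
  also have "... \<ge> 0" using X by (intro add_nonneg_nonneg mult_nonneg_nonneg zero_le_power; simp)
  finally show ?thesis .
qed

lemma up1_pos:
  fixes \<nu> a u :: real assumes "0 < \<nu>" "\<nu> < 1/2" "a > 0" "u > 0"
  shows "(2 - (19/2)*\<nu> + 17*\<nu>^2 - (27/2)*\<nu>^3 + 4*\<nu>^4)*a^4*u^0 + (10 - 40*\<nu> + 59*\<nu>^2 - 37*\<nu>^3 + 8*\<nu>^4)*a^3*u^1 + (4 - (11/2)*\<nu> - 9*\<nu>^2 + 23*\<nu>^3 - 12*\<nu>^4)*a^2*u^2 + (2*\<nu> - 3*\<nu>^2 + 3*\<nu>^3)*a^1*u^3 + ((1/2)*\<nu>^3)*a^0*u^4 \<ge> 0"
  by (rule quartic_nonneg[OF up1_c0[OF assms(1,2)] up1_c1[OF assms(1,2)] up1_c2[OF assms(1,2)] up1_c3[OF assms(1,2)] up1_c4[OF assms(1,2)]]) (use assms in auto)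

lemma low2_c0:
  fixes \<nu> :: real assumes "1/2 < \<nu>" "\<nu> < 1"
  shows "((1/2) - 3*\<nu> + (13/2)*\<nu>^2 - 4*\<nu>^3) \<ge> 0"
proof -
  have X: "0 \<le> (2*\<nu>-1)" "0 \<le> (2-2*\<nu>)" using assms by simp_all
  have "((1/2) - 3*\<nu> + (13/2)*\<nu>^2 - 4*\<nu>^3) = (1/8)*(2*\<nu>-1)^0*(2-2*\<nu>)^3 + (5/8)*(2*\<nu>-1)^1*(2-2*\<nu>)^2 + 1*(2*\<nu>-1)^2*(2-2*\<nu>)^1" by algebra
  also have "... \<ge> 0" using X by (intro add_nonneg_nonneg mult_nonneg_nonneg zero_le_power; simp)
  finally show ?thesis .
qed

lemma low2_c1:
  fixes \<nu> :: real assumes "1/2 < \<nu>" "\<nu> < 1"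
  shows "(2 - 13*\<nu> + 23*\<nu>^2 - 8*\<nu>^3) \<ge> 0"
proof -
  have X: "0 \<le> (2*\<nu>-1)" "0 \<le> (2-2*\<nu>)" using assms by simp_all
  have "(2 - 13*\<nu> + 23*\<nu>^2 - 8*\<nu>^3) = (1/4)*(2*\<nu>-1)^0*(2-2*\<nu>)^3 + (11/4)*(2*\<nu>-1)^1*(2-2*\<nu>)^2 + (15/2)*(2*\<nu>-1)^2*(2-2*\<nu>)^1 + 4*(2*\<nu>-1)^3*(2-2*\<nu>)^0" by algebra
  also have "... \<ge> 0" using X by (intro add_nonneg_nonneg mult_nonneg_nonneg zero_le_power; simp)
  finally show ?thesis .
qed

lemma low2_c2:
  fixes \<nu> :: real assumes "1/2 < \<nu>" "\<nu> < 1"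
  shows "((1/2) - 1*\<nu> - 5*\<nu>^2 + 12*\<nu>^3) \<ge> 0"
proof -
  have X: "0 \<le> (2*\<nu>-1)" "0 \<le> (2-2*\<nu>)" using assms by simp_all
  have "((1/2) - 1*\<nu> - 5*\<nu>^2 + 12*\<nu>^3) = (1/4)*(2*\<nu>-1)^0*(2-2*\<nu>)^3 + (9/4)*(2*\<nu>-1)^1*(2-2*\<nu>)^2 + 7*(2*\<nu>-1)^2*(2-2*\<nu>)^1 + (13/2)*(2*\<nu>-1)^3*(2-2*\<nu>)^0" by algebra
  also have "... \<ge> 0" using X by (intro add_nonneg_nonneg mult_nonneg_nonneg zero_le_power; simp)
  finally show ?thesis .
qed

lemma low2_c3:
  fixes \<nu> :: real assumes "1/2 < \<nu>" "\<nu> < 1"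
  shows "(1*\<nu> - 1*\<nu>^2) \<ge> 0"
proof -
  have X: "0 \<le> (2*\<nu>-1)" "0 \<le> (2-2*\<nu>)" using assms by simp_all
  have "(1*\<nu> - 1*\<nu>^2) = (1/4)*(2*\<nu>-1)^0*(2-2*\<nu>)^2 + (1/2)*(2*\<nu>-1)^1*(2-2*\<nu>)^1" by algebra
  also have "... \<ge> 0" using X by (intro add_nonneg_nonneg mult_nonneg_nonneg zero_le_power; simp)
  finally show ?thesis .
qed

lemma low2_c4:
  fixes \<nu> :: real assumes "1/2 < \<nu>" "\<nu> < 1"
  shows "((1/2)*\<nu>^2) \<ge> 0"
proof -
  have X: "0 \<le> (2*\<nu>-1)" "0 \<le> (2-2*\<nu>)" using assms by simp_all
  have "((1/2)*\<nu>^2) = (1/8)*(2*\<nu>-1)^0*(2-2*\<nu>)^2 + (1/2)*(2*\<nu>-1)^1*(2-2*\<nu>)^1 + (1/2)*(2*\<nu>-1)^2*(2-2*\<nu>)^0" by algebra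
  also have "... \<ge> 0" using X by (intro add_nonneg_nonneg mult_nonneg_nonneg zero_le_power; simp)
  finally show ?thesis .
qed

lemma low2_pos:
  fixes \<nu> a u :: real assumes "1/2 < \<nu>" "\<nu> < 1" "a > 0" "u > 0"
  shows "((1/2) - 3*\<nu> + (13/2)*\<nu>^2 - 4*\<nu>^3)*a^4*u^0 + (2 - 13*\<nu> + 23*\<nu>^2 - 8*\<nu>^3)*a^3*u^1 + ((1/2) - 1*\<nu> - 5*\<nu>^2 + 12*\<nu>^3)*a^2*u^2 + (1*\<nu> - 1*\<nu>^2)*a^1*u^3 + ((1/2)*\<nu>^2)*a^0*u^4 \<ge> 0"
  by (rule quartic_nonneg[OF low2_c0[OF assms(1,2)] low2_c1[OF assms(1,2)] low2_c2[OF assms(1,2)] low2_c3[OF assms(1,2)] low2_c4[OF assms(1,2)]]) (use assms in auto)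

lemma up2_c0:
  fixes \<nu> :: real assumes "1/2 < \<nu>" "\<nu> < 1"
  shows "((1/2) - (3/2)*\<nu> + (3/2)*\<nu>^2 - (1/2)*\<nu>^3) \<ge> 0"
proof -
  have X: "0 \<le> (2*\<nu>-1)" "0 \<le> (2-2*\<nu>)" using assms by simp_all
  have "((1/2) - (3/2)*\<nu> + (3/2)*\<nu>^2 - (1/2)*\<nu>^3) = (1/16)*(2*\<nu>-1)^0*(2-2*\<nu>)^3" by algebra
  also have "... \<ge> 0" using X by (intro add_nonneg_nonneg mult_nonneg_nonneg zero_le_power; simp)
  finally show ?thesis .
qed

lemma up2_c1:
  fixes \<nu> :: real assumes "1/2 < \<nu>" "\<nu> < 1"
  shows "(2 - 5*\<nu> + 6*\<nu>^2 - 3*\<nu>^3) \<ge> 0"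
proof -
  have X: "0 \<le> (2*\<nu>-1)" "0 \<le> (2-2*\<nu>)" using assms by simp_all
  have "(2 - 5*\<nu> + 6*\<nu>^2 - 3*\<nu>^3) = (5/8)*(2*\<nu>-1)^0*(2-2*\<nu>)^3 + (5/4)*(2*\<nu>-1)^1*(2-2*\<nu>)^2 + 1*(2*\<nu>-1)^2*(2-2*\<nu>)^1" by algebra
  also have "... \<ge> 0" using X by (intro add_nonneg_nonneg mult_nonneg_nonneg zero_le_power; simp)
  finally show ?thesis .
qed

lemma up2_c2:
  fixes \<nu> :: real assumes "1/2 < \<nu>" "\<nu> < 1"
  shows "((1/2) + (5/2)*\<nu> - 12*\<nu>^2 + 25*\<nu>^3 - 12*\<nu>^4) \<ge> 0"
proof -
  have X: "0 \<le> (2*\<nu>-1)" "0 \<le> (2-2*\<nu>)" using assms by simp_all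
  have "((1/2) + (5/2)*\<nu> - 12*\<nu>^2 + 25*\<nu>^3 - 12*\<nu>^4) = (9/8)*(2*\<nu>-1)^0*(2-2*\<nu>)^4 + (49/8)*(2*\<nu>-1)^1*(2-2*\<nu>)^3 + (27/2)*(2*\<nu>-1)^2*(2-2*\<nu>)^2 + (53/4)*(2*\<nu>-1)^3*(2-2*\<nu>)^1 + 4*(2*\<nu>-1)^4*(2-2*\<nu>)^0" by algebra
  also have "... \<ge> 0" using X by (intro add_nonneg_nonneg mult_nonneg_nonneg zero_le_power; simp)
  finally show ?thesis .
qed

lemma up2_c3:
  fixes \<nu> :: real assumes "1/2 < \<nu>" "\<nu> < 1"
  shows "(1*\<nu> - 4*\<nu>^2 + 5*\<nu>^3 + 8*\<nu>^4) \<ge> 0"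
proof -
  have X: "0 \<le> (2*\<nu>-1)" "0 \<le> (2-2*\<nu>)" using assms by simp_all
  have "(1*\<nu> - 4*\<nu>^2 + 5*\<nu>^3 + 8*\<nu>^4) = (5/8)*(2*\<nu>-1)^0*(2-2*\<nu>)^4 + (39/8)*(2*\<nu>-1)^1*(2-2*\<nu>)^3 + (59/4)*(2*\<nu>-1)^2*(2-2*\<nu>)^2 + 20*(2*\<nu>-1)^3*(2-2*\<nu>)^1 + 10*(2*\<nu>-1)^4*(2-2*\<nu>)^0" by algebra
  also have "... \<ge> 0" using X by (intro add_nonneg_nonneg mult_nonneg_nonneg zero_le_power; simp)
  finally show ?thesis .
qed

lemma up2_c4:
  fixes \<nu> :: real assumes "1/2 < \<nu>" "\<nu> < 1"
  shows "((1/2)*\<nu>^2 - (5/2)*\<nu>^3 + 4*\<nu>^4) \<ge> 0"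
proof -
  have X: "0 \<le> (2*\<nu>-1)" "0 \<le> (2-2*\<nu>)" using assms by simp_all
  have "((1/2)*\<nu>^2 - (5/2)*\<nu>^3 + 4*\<nu>^4) = (1/16)*(2*\<nu>-1)^0*(2-2*\<nu>)^4 + (9/16)*(2*\<nu>-1)^1*(2-2*\<nu>)^3 + 2*(2*\<nu>-1)^2*(2-2*\<nu>)^2 + (13/4)*(2*\<nu>-1)^3*(2-2*\<nu>)^1 + 2*(2*\<nu>-1)^4*(2-2*\<nu>)^0" by algebra
  also have "... \<ge> 0" using X by (intro add_nonneg_nonneg mult_nonneg_nonneg zero_le_power; simp)
  finally show ?thesis .
qed

lemma up2_pos:
  fixes \<nu> a u :: real assumes "1/2 < \<nu>" "\<nu> < 1" "a > 0" "u > 0"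
  shows "((1/2) - (3/2)*\<nu> + (3/2)*\<nu>^2 - (1/2)*\<nu>^3)*a^4*u^0 + (2 - 5*\<nu> + 6*\<nu>^2 - 3*\<nu>^3)*a^3*u^1 + ((1/2) + (5/2)*\<nu> - 12*\<nu>^2 + 25*\<nu>^3 - 12*\<nu>^4)*a^2*u^2 + (1*\<nu> - 4*\<nu>^2 + 5*\<nu>^3 + 8*\<nu>^4)*a^1*u^3 + ((1/2)*\<nu>^2 - (5/2)*\<nu>^3 + 4*\<nu>^4)*a^0*u^4 \<ge> 0"
  by (rule quartic_nonneg[OF up2_c0[OF assms(1,2)] up2_c1[OF assms(1,2)] up2_c2[OF assms(1,2)] up2_c3[OF assms(1,2)] up2_c4[OF assms(1,2)]]) (use assms in auto)

lemma Q_low1: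
  fixes \<nu> a u :: real assumes n: "0 < \<nu>" "\<nu> < 1/2" and a: "a > 0" and u: "u > 0"
  shows "P0 \<nu> a u - \<nu>*P1 \<nu> a u - (\<nu>*(3-4*\<nu>)/(4*(1-\<nu>)))*P2 \<nu> a u \<ge> 0"
proof -
  have id: "4*(1-\<nu>)*P0 \<nu> a u - 4*(1-\<nu>)*\<nu>*P1 \<nu> a u - \<nu>*(3-4*\<nu>)*P2 \<nu> a u = 2*\<nu>*(((1/2) - 1*\<nu> + (1/2)*\<nu>^2)*a^4*u^0 + (1*\<nu> - 1*\<nu>^2)*a^3*u^1 + ((13/2) - 25*\<nu> + 31*\<nu>^2 - 12*\<nu>^3)*a^2*u^2 + (4 - 9*\<nu> - 1*\<nu>^2 + 8*\<nu>^3)*a^1*u^3 + (2*\<nu> - (11/2)*\<nu>^2 + 4*\<nu>^3)*a^0*u^4)"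
    unfolding P0_def P1_def P2_def by algebra
  have pos: "2*\<nu>*(((1/2) - 1*\<nu> + (1/2)*\<nu>^2)*a^4*u^0 + (1*\<nu> - 1*\<nu>^2)*a^3*u^1 + ((13/2) - 25*\<nu> + 31*\<nu>^2 - 12*\<nu>^3)*a^2*u^2 + (4 - 9*\<nu> - 1*\<nu>^2 + 8*\<nu>^3)*a^1*u^3 + (2*\<nu> - (11/2)*\<nu>^2 + 4*\<nu>^3)*a^0*u^4) \<ge> 0" using low1_pos[OF n a u] n by simp
  define Qx where "Qx = P0 \<nu> a u - \<nu>*P1 \<nu> a u - (\<nu>*(3-4*\<nu>)/(4*(1-\<nu>)))*P2 \<nu> a u"
  have m: "4*(1-\<nu>)*Qx = 4*(1-\<nu>)*P0 \<nu> a u - 4*(1-\<nu>)*\<nu>*P1 \<nu> a u - \<nu>*(3-4*\<nu>)*P2 \<nu> a u" unfolding Qx_def using n by (simp add: field_simps power2_eq_square)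
  have "4*(1-\<nu>)*Qx \<ge> 0" using m id pos by simp
  then show ?thesis unfolding Qx_def[symmetric] using n by (simp add: zero_le_mult_iff mult_le_0_iff)
qed

lemma Q_up1:
  fixes \<nu> a u :: real assumes n: "0 < \<nu>" "\<nu> < 1/2" and a: "a > 0" and u: "u > 0"
  shows "P0 \<nu> a u - (1-\<nu>)*P1 \<nu> a u - ((4-7*\<nu>+4*\<nu>^2)/(4*(1-\<nu>)))*P2 \<nu> a u \<le> 0"
proof -
  have id: "4*(1-\<nu>)^2*P1 \<nu> a u + (4-7*\<nu>+4*\<nu>^2)*P2 \<nu> a u - 4*(1-\<nu>)*P0 \<nu> a u = 2*((2 - (19/2)*\<nu> + 17*\<nu>^2 - (27/2)*\<nu>^3 + 4*\<nu>^4)*a^4*u^0 + (10 - 40*\<nu> + 59*\<nu>^2 - 37*\<nu>^3 + 8*\<nu>^4)*a^3*u^1 + (4 - (11/2)*\<nu> - 9*\<nu>^2 + 23*\<nu>^3 - 12*\<nu>^4)*a^2*u^2 + (2*\<nu> - 3*\<nu>^2 + 3*\<nu>^3)*a^1*u^3 + ((1/2)*\<nu>^3)*a^0*u^4)"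
    unfolding P0_def P1_def P2_def by algebra
  have pos: "2*((2 - (19/2)*\<nu> + 17*\<nu>^2 - (27/2)*\<nu>^3 + 4*\<nu>^4)*a^4*u^0 + (10 - 40*\<nu> + 59*\<nu>^2 - 37*\<nu>^3 + 8*\<nu>^4)*a^3*u^1 + (4 - (11/2)*\<nu> - 9*\<nu>^2 + 23*\<nu>^3 - 12*\<nu>^4)*a^2*u^2 + (2*\<nu> - 3*\<nu>^2 + 3*\<nu>^3)*a^1*u^3 + ((1/2)*\<nu>^3)*a^0*u^4) \<ge> 0" using up1_pos[OF n a u] n by simp
  define Qx where "Qx = P0 \<nu> a u - (1-\<nu>)*P1 \<nu> a u - ((4-7*\<nu>+4*\<nu>^2)/(4*(1-\<nu>)))*P2 \<nu> a u"
  have m: "-4*(1-\<nu>)*Qx = 4*(1-\<nu>)^2*P1 \<nu> a u + (4-7*\<nu>+4*\<nu>^2)*P2 \<nu> a u - 4*(1-\<nu>)*P0 \<nu> a u" unfolding Qx_def using n by (simp add: field_simps power2_eq_square)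
  have "-4*(1-\<nu>)*Qx \<ge> 0" using m id pos by simp
  then show ?thesis unfolding Qx_def[symmetric] using n by (simp add: zero_le_mult_iff mult_le_0_iff)
qed

lemma Q_low2:
  fixes \<nu> a u :: real assumes n: "1/2 < \<nu>" "\<nu> < 1" and a: "a > 0" and u: "u > 0"
  shows "P0 \<nu> a u - (1-\<nu>)*P1 \<nu> a u - ((1-\<nu>)*(4*\<nu>-1)/(4*\<nu>))*P2 \<nu> a u \<ge> 0"
proof -
  have id: "4*\<nu>*P0 \<nu> a u - 4*\<nu>*(1-\<nu>)*P1 \<nu> a u - (1-\<nu>)*(4*\<nu>-1)*P2 \<nu> a u = 2*(1-\<nu>)*(((1/2) - 3*\<nu> + (13/2)*\<nu>^2 - 4*\<nu>^3)*a^4*u^0 + (2 - 13*\<nu> + 23*\<nu>^2 - 8*\<nu>^3)*a^3*u^1 + ((1/2) - 1*\<nu> - 5*\<nu>^2 + 12*\<nu>^3)*a^2*u^2 + (1*\<nu> - 1*\<nu>^2)*a^1*u^3 + ((1/2)*\<nu>^2)*a^0*u^4)"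
    unfolding P0_def P1_def P2_def by algebra
  have pos: "2*(1-\<nu>)*(((1/2) - 3*\<nu> + (13/2)*\<nu>^2 - 4*\<nu>^3)*a^4*u^0 + (2 - 13*\<nu> + 23*\<nu>^2 - 8*\<nu>^3)*a^3*u^1 + ((1/2) - 1*\<nu> - 5*\<nu>^2 + 12*\<nu>^3)*a^2*u^2 + (1*\<nu> - 1*\<nu>^2)*a^1*u^3 + ((1/2)*\<nu>^2)*a^0*u^4) \<ge> 0" using low2_pos[OF n a u] n by simp
  define Qx where "Qx = P0 \<nu> a u - (1-\<nu>)*P1 \<nu> a u - ((1-\<nu>)*(4*\<nu>-1)/(4*\<nu>))*P2 \<nu> a u"
  have m: "4*\<nu>*Qx = 4*\<nu>*P0 \<nu> a u - 4*\<nu>*(1-\<nu>)*P1 \<nu> a u - (1-\<nu>)*(4*\<nu>-1)*P2 \<nu> a u" unfolding Qx_def using n by (simp add: field_simps power2_eq_square)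
  have "4*\<nu>*Qx \<ge> 0" using m id pos by simp
  then show ?thesis unfolding Qx_def[symmetric] using n by (simp add: zero_le_mult_iff mult_le_0_iff)
qed

lemma Q_up2:
  fixes \<nu> a u :: real assumes n: "1/2 < \<nu>" "\<nu> < 1" and a: "a > 0" and u: "u > 0"
  shows "P0 \<nu> a u - \<nu>*P1 \<nu> a u - ((4*\<nu>^2-\<nu>+1)/(4*\<nu>))*P2 \<nu> a u \<le> 0"
proof -
  have id: "4*\<nu>^2*P1 \<nu> a u + (4*\<nu>^2-\<nu>+1)*P2 \<nu> a u - 4*\<nu>*P0 \<nu> a u = 2*(((1/2) - (3/2)*\<nu> + (3/2)*\<nu>^2 - (1/2)*\<nu>^3)*a^4*u^0 + (2 - 5*\<nu> + 6*\<nu>^2 - 3*\<nu>^3)*a^3*u^1 + ((1/2) + (5/2)*\<nu> - 12*\<nu>^2 + 25*\<nu>^3 - 12*\<nu>^4)*a^2*u^2 + (1*\<nu> - 4*\<nu>^2 + 5*\<nu>^3 + 8*\<nu>^4)*a^1*u^3 + ((1/2)*\<nu>^2 - (5/2)*\<nu>^3 + 4*\<nu>^4)*a^0*u^4)"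
    unfolding P0_def P1_def P2_def by algebra
  have pos: "2*(((1/2) - (3/2)*\<nu> + (3/2)*\<nu>^2 - (1/2)*\<nu>^3)*a^4*u^0 + (2 - 5*\<nu> + 6*\<nu>^2 - 3*\<nu>^3)*a^3*u^1 + ((1/2) + (5/2)*\<nu> - 12*\<nu>^2 + 25*\<nu>^3 - 12*\<nu>^4)*a^2*u^2 + (1*\<nu> - 4*\<nu>^2 + 5*\<nu>^3 + 8*\<nu>^4)*a^1*u^3 + ((1/2)*\<nu>^2 - (5/2)*\<nu>^3 + 4*\<nu>^4)*a^0*u^4) \<ge> 0" using up2_pos[OF n a u] n by simp
  define Qx where "Qx = P0 \<nu> a u - \<nu>*P1 \<nu> a u - ((4*\<nu>^2-\<nu>+1)/(4*\<nu>))*P2 \<nu> a u"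
  have m: "-4*\<nu>*Qx = 4*\<nu>^2*P1 \<nu> a u + (4*\<nu>^2-\<nu>+1)*P2 \<nu> a u - 4*\<nu>*P0 \<nu> a u" unfolding Qx_def using n by (simp add: field_simps power2_eq_square)
  have "-4*\<nu>*Qx \<ge> 0" using m id pos by simp
  then show ?thesis unfolding Qx_def[symmetric] using n by (simp add: zero_le_mult_iff mult_le_0_iff)
qed



lemma pw: fixes x y :: real shows "x > 0 \<Longrightarrow> x powr y = exp (y * ln x)" by (simp add: powr_def)

lemma wam_wgm:
  fixes a b \<nu> :: real
  assumes a: "a > 0" and b: "b > 0" and n: "0 < \<nu>" "\<nu> < 1"
  shows "wam \<nu> a b / wgm \<nu> a b = exp (Lf \<nu> a b)"
proof -
  have W: "(1-\<nu>)*a + \<nu>*b > 0" using Wf_pos[OF a n b] unfolding Wf_def .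
  have "ln (wam \<nu> a b / wgm \<nu> a b) = Lf \<nu> a b"
    unfolding wam_def wgm_def Lf_def Wf_def using W a b by (simp add: ln_div ln_mult ln_powr)
  moreover have "wam \<nu> a b / wgm \<nu> a b > 0" unfolding wam_def wgm_def using W a b by simp
  ultimately show ?thesis by (metis exp_ln)
qed

lemma kant_exp:
  fixes a b :: real
  assumes a: "a > 0" and b: "b > 0"
  shows "kant a b = exp (kf a b)"
proof -
  have l4: "ln (4::real) = 2*ln 2" using ln_realpow[of 2 2] by simp
  have "ln (kant a b) = kf a b"
    unfolding kant_def kf_def using a b by (simp add: ln_div ln_mult ln_realpow l4)
  moreover have "kant a b > 0" unfolding kant_def using a b by simp
  ultimately show ?thesis by (metis exp_ln)
qed

lemma alpha_exp:
  fixes a b \<nu> :: real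
  assumes a: "a > 0" and b: "b > 0" and n: "0 < \<nu>" "\<nu> < 1" "\<nu> \<noteq> 1/2"
  shows "alpha_nu \<nu> a b = exp (Hf \<nu> a b / (b - a))"
proof -
  have W: "(1-\<nu>)*a + \<nu>*b > 0" using Wf_pos[OF a n(1,2) b] unfolding Wf_def .
  define X where "X = ((a powr (a / \<nu>) / b powr (b / (1 - \<nu>)))
      * ((wam \<nu> a b) powr (wam \<nu> a b / (\<nu> * (1 - \<nu>) * (2*\<nu> - 1)))
         / ((a + b) / 2) powr (2 * (a + b) / (2*\<nu> - 1))))"
  have X: "X > 0" unfolding X_def wam_def using a b W by simp
  have "ln X = Hf \<nu> a b"
  proof -
    have "ln X = (a/\<nu>)*ln a - (b/(1-\<nu>))*ln b + (((1-\<nu>)*a + \<nu>*b)/(\<nu>*(1-\<nu>)*(2*\<nu>-1)))*ln ((1-\<nu>)*a + \<nu>*b)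
       - (2*(a+b)/(2*\<nu>-1))*ln ((a+b)/2)"
      unfolding X_def wam_def using a b W by (simp add: ln_div ln_mult ln_powr)
    also have "... = Hf \<nu> a b"
    proof -
      have e: "4*(((a+b)/2)*ln((a+b)/2)) = 2*(a+b)*ln((a+b)/2)" by simp
      show ?thesis unfolding Hf_def e by (simp add: times_divide_eq_left)
    qed
    finally show ?thesis .
  qed
  then show ?thesis unfolding alpha_nu_def X_def[symmetric] using X by (simp add: pw)
qed

lemma identric_le:
  fixes a b \<nu> :: real
  assumes a: "a > 0" and b: "b > 0" and ab: "a \<noteq> b" and n: "0 < \<nu>" "\<nu> < 1" "\<nu> \<noteq> 1/2"
  shows "identric_w \<nu> a b
        \<le> (1 / exp 1) * ((a powr a / b powr b)
             * (((a + b) / 2) powr (2 * (a + b) / (1 - 2*\<nu>))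
                / (wam \<nu> a b) powr (4 * wam \<nu> a b / (1 - 2*\<nu>)))) powr (1 / (b - a))"
    (is "?L \<le> ?R")
proof -
  define W where "W = (1-\<nu>)*a + \<nu>*b"
  have W: "W > 0" using Wf_pos[OF a n(1,2) b] unfolding Wf_def W_def .
  have M: "(a+b)/2 > 0" using a b by simp
  have lnL: "ln ?L = -1 + ((1 - 2*\<nu>) * W / (\<nu> * (1 - \<nu>) * (b - a)))*ln W
      + (1/(b-a))*((\<nu> * b / (1 - \<nu>))*ln b - ((1 - \<nu>) * a / \<nu>)*ln a)"
    unfolding identric_w_def wam_def W_def[symmetric] using a b W by (simp add: ln_div ln_mult ln_powr)
  have lnR: "ln ?R = -1 + (1/(b-a))*((a*ln a - b*ln b) + ((2 * (a + b) / (1 - 2*\<nu>))*ln ((a+b)/2)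
      - (4 * W / (1 - 2*\<nu>))*ln W))"
    unfolding wam_def W_def[symmetric] using a b W M by (simp add: ln_div ln_mult ln_powr)
  have Lpos: "?L > 0" unfolding identric_w_def wam_def W_def[symmetric] using a b W by simp
  have Rpos: "?R > 0" unfolding wam_def W_def[symmetric] using a b W M by simp
  have key: "ln ?R - ln ?L = Hf \<nu> a b / (b - a)"
  proof -
    define A where "A = 1 - \<nu>"
    define B where "B = 2*\<nu> - 1"
    define C where "C = 1 - 2*\<nu>"
    define d where "d = b - a"
    have nz: "A \<noteq> 0" "B \<noteq> 0" "C \<noteq> 0" "d \<noteq> 0" "\<nu> \<noteq> 0"
      using n ab A_def B_def C_def d_def by auto
    have e: "4*(((a+b)/2)*ln((a+b)/2)) = 2*(a+b)*ln((a+b)/2)" by simp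
    have AS: "\<nu> + A = 1" "C = - B" unfolding A_def B_def C_def by simp_all
    have c1: "a + A*a/\<nu> = a/\<nu>" using nz unfolding A_def by (simp add: field_simps)
    have c2: "-b - \<nu>*b/A = -b/A" using nz unfolding A_def by (simp add: field_simps)
    have c3: "2*(a+b)/C = -(2*(a+b)/B)" using AS by simp
    have c4: "-(4*W/C) - C*W/(\<nu>*A) = W/(\<nu>*A*B)"
    proof -
      have r: "4*\<nu>*A + C*C = 1" unfolding A_def C_def by (simp add: algebra_simps)
      have "-(4*W/C) - C*W/(\<nu>*A) = -(W*(4*\<nu>*A + C*C))/(\<nu>*A*C)" using nz by (simp add: field_simps)
      also have "... = W/(\<nu>*A*B)" unfolding r using AS nz by (simp add: field_simps)
      finally show ?thesis .
    qed
    have de: "d * (C * W / (\<nu> * A * d)) = C*W/(\<nu>*A)" using nz by simp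
    have "d*(ln ?R - ln ?L) = (a*ln a - b*ln b + (2*(a+b)/C)*ln ((a+b)/2) - (4*W/C)*ln W)
        - (C*W/(\<nu>*A))*ln W - ((\<nu>*b/A)*ln b - (A*a/\<nu>)*ln a)"
      unfolding lnL lnR unfolding A_def[symmetric] C_def[symmetric] d_def[symmetric] using nz
      by (simp add: right_diff_distrib distrib_left de mult.assoc[symmetric])
    also have "... = (a + A*a/\<nu>)*ln a + (-b - \<nu>*b/A)*ln b + (2*(a+b)/C)*ln ((a+b)/2) + (-(4*W/C) - C*W/(\<nu>*A))*ln W"
      by (simp add: algebra_simps)
    also have "... = Hf \<nu> a b"
      unfolding c1 c2 c3 c4 Hf_def e unfolding W_def[symmetric] unfolding A_def[symmetric] B_def[symmetric]
      by (simp add: algebra_simps)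
    finally show ?thesis using nz unfolding d_def by (simp add: field_simps)
  qed
  have "ln ?L \<le> ln ?R" using key la_nonneg[OF a b ab n] by simp
  then show ?thesis using Lpos Rpos by simp
qed

lemma exp_powr': fixes x y :: real shows "(exp x) powr y = exp (y * x)" by (simp add: pw)

theorem mainTheorem14:
  fixes a b \<nu> :: real
  assumes "a > 0" and "b > 0" and "a \<noteq> b"
    and "0 < \<nu>" and "\<nu> < 1" and "\<nu> \<noteq> 1/2"
  shows "alpha_nu \<nu> a b \<ge> 1
    \<and> alpha_nu \<nu> a b powr (min \<nu> (1 - \<nu>)) * kant a b powr (r_tilde \<nu>)
        \<le> wam \<nu> a b / wgm \<nu> a b
    \<and> wam \<nu> a b / wgm \<nu> a b
        \<le> alpha_nu \<nu> a b powr (max \<nu> (1 - \<nu>)) * kant a b powr (R_tilde \<nu>)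
    \<and> identric_w \<nu> a b
        \<le> (1 / exp 1) * ((a powr a / b powr b)
             * (((a + b) / 2) powr (2 * (a + b) / (1 - 2*\<nu>))
                / (wam \<nu> a b) powr (4 * wam \<nu> a b / (1 - 2*\<nu>)))) powr (1 / (b - a))"
proof -
  note a = assms(1) and b = assms(2) and ab = assms(3) and n = assms(4,5,6)
  define la where "la = Hf \<nu> a b / (b - a)"
  have E1: "wam \<nu> a b / wgm \<nu> a b = exp (Lf \<nu> a b)" by (rule wam_wgm[OF a b n(1,2)])
  have E2: "kant a b = exp (kf a b)" by (rule kant_exp[OF a b])
  have E3: "alpha_nu \<nu> a b = exp la" unfolding la_def by (rule alpha_exp[OF a b n])
  have la0: "la \<ge> 0" unfolding la_def by (rule la_nonneg[OF a b ab n])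
  have I: "alpha_nu \<nu> a b \<ge> 1" unfolding E3 using la0 by simp
  have ID: "identric_w \<nu> a b
        \<le> (1 / exp 1) * ((a powr a / b powr b)
             * (((a + b) / 2) powr (2 * (a + b) / (1 - 2*\<nu>))
                / (wam \<nu> a b) powr (4 * wam \<nu> a b / (1 - 2*\<nu>)))) powr (1 / (b - a))"
    by (rule identric_le[OF a b ab n])
  have low: "alpha_nu \<nu> a b powr p * kant a b powr q \<le> wam \<nu> a b / wgm \<nu> a b"
    if "p * la + q * kf a b \<le> Lf \<nu> a b" for p q
    unfolding E1 E2 E3 exp_powr' using that by (simp add: exp_add[symmetric] mult.commute)
  have up: "wam \<nu> a b / wgm \<nu> a b \<le> alpha_nu \<nu> a b powr p * kant a b powr q"
    if "Lf \<nu> a b \<le> p * la + q * kf a b" for p q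
    unfolding E1 E2 E3 exp_powr' using that by (simp add: exp_add[symmetric] mult.commute)
  show ?thesis
  proof (cases "\<nu> < 1/2")
    case True
    have n1: "0 < \<nu>" "\<nu> < 1/2" using n True by auto
    have mm: "min \<nu> (1 - \<nu>) = \<nu>" "max \<nu> (1 - \<nu>) = 1 - \<nu>" using True by auto
    have rr: "r_tilde \<nu> = \<nu>*(3-4*\<nu>)/(4*(1-\<nu>))" "R_tilde \<nu> = 1 - \<nu>*(3-4*\<nu>)/(4*(1-\<nu>))"
      using R_from_r[OF r_tilde_lt[OF n1]] by auto
    have q2: "1 - \<nu>*(3-4*\<nu>)/(4*(1-\<nu>)) = (4-7*\<nu>+4*\<nu>^2)/(4*(1-\<nu>))"
    proof -
      define D where "D = 1 - \<nu>"
      have n': "\<nu> = 1 - D" unfolding D_def by simp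
      have "D \<noteq> 0" using n D_def by simp
      then show ?thesis unfolding D_def[symmetric] unfolding n' by (simp add: field_simps power2_eq_square)
    qed
    have L1: "\<nu> * la + (\<nu>*(3-4*\<nu>)/(4*(1-\<nu>))) * kf a b \<le> Lf \<nu> a b"
      unfolding la_def by (rule main_lower[OF a b ab n]) (rule Q_low1[OF n1 a], simp)
    have U1: "Lf \<nu> a b \<le> (1-\<nu>) * la + ((4-7*\<nu>+4*\<nu>^2)/(4*(1-\<nu>))) * kf a b"
      unfolding la_def by (rule main_upper[OF a b ab n]) (rule Q_up1[OF n1 a], simp)
    show ?thesis using I ID low[OF L1] up[OF U1] unfolding mm rr q2 by simp
  next
    case False
    then have n2: "1/2 < \<nu>" "\<nu> < 1" using n by auto
    have mm: "min \<nu> (1 - \<nu>) = 1 - \<nu>" "max \<nu> (1 - \<nu>) = \<nu>" using n2 by auto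
    have rr: "r_tilde \<nu> = (1-\<nu>)*(4*\<nu>-1)/(4*\<nu>)" "R_tilde \<nu> = 1 - (1-\<nu>)*(4*\<nu>-1)/(4*\<nu>)"
      using R_from_r[OF r_tilde_gt[OF n2]] by auto
    have q2: "1 - (1-\<nu>)*(4*\<nu>-1)/(4*\<nu>) = (4*\<nu>^2-\<nu>+1)/(4*\<nu>)"
    proof -
      have "\<nu> \<noteq> 0" using n by simp
      then show ?thesis by (simp add: field_simps power2_eq_square; simp add: algebra_simps)
    qed
    have L1: "(1-\<nu>) * la + ((1-\<nu>)*(4*\<nu>-1)/(4*\<nu>)) * kf a b \<le> Lf \<nu> a b"
      unfolding la_def by (rule main_lower[OF a b ab n]) (rule Q_low2[OF n2 a], simp)
    have U1: "Lf \<nu> a b \<le> \<nu> * la + ((4*\<nu>^2-\<nu>+1)/(4*\<nu>)) * kf a b"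
      unfolding la_def by (rule main_upper[OF a b ab n]) (rule Q_up2[OF n2 a], simp)
    show ?thesis using I ID low[OF L1] up[OF U1] unfolding mm rr q2 by simp
  qed
qed


end
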